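(* Let $i\ge 1$ and let $p_1,\dots,p_i$ be primitive elements of ${\cal H}_R$. Then $$\tilde\Delta(p_i\top\cdots\top p_1)=\sum_{j=1}^{i-1}(p_i\top\cdots\top p_{j+1})\otimes(p_j\top\cdots\top p_1).$$
   Context: A rooted tree is a finite connected and simply connected graph with a distinguished vertex (the root), edges oriented away from the root; its weight is its number of vertices. ${\cal H}_R$ is the commutative polynomial algebra over $\mathbb{Q}$ on the isomorphism classes of rooted trees; monomials are forests ($1$ is the empty forest), the weight of a forest is its total number of vertices. An admissible cut $C$ of a tree $t$ is a nonempty set of edges such that every path from the root to a vertex contains at most one edge of $C$; removing them gives a forest in which $R^C(t)$ is the tree containing the root and $P^C(t)$ the product of the others. The coproduct is the algebra morphism $\Delta$ with $\Delta(t)=1\otimes t+t\otimes 1+\sum_{C}P^C(t)\otimes R^C(t)$ (sum over admissible cuts) on trees; $\tilde\Delta(x):=\Delta(x)-1\otimes x-x\otimes 1$, and $x$ is primitive iff $\tilde\Delta(x)=0$. For forests $M,N$: $M\top N=0$ if $N=1$, and otherwise $M\top N=\frac{1}{weight(N)}\sum_{v}N_v$, where $v$ runs over the vertices of $N$ and $N_v$ is the forest obtained from $N$ by attaching every tree of $M$ to $v$ (adding an edge from $v$ to the root of each tree of $M$); $\top$ is extended bilinearly to ${\cal H}_R\times{\cal H}_R$. Iterated products are nested to the left: $p_i\top\cdots\top p_1:=(p_i\top\cdots\top p_2)\top p_1$, and $p_1$ alone for $i=1$. *)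

theory Defs
  imports Complex_Main "HOL-Library.Multiset" "HOL-Library.Poly_Mapping" "HOL-Library.Product_Plus"
begin

text \<open>An isomorphism class of rooted trees is a root together with the (unordered)
  multiset of the isomorphism classes of its subtrees hanging from the root.\<close>
datatype tree = Node "tree multiset"

type_synonym forest = "tree multiset"

text \<open>The algebra H_R: commutative polynomial algebra over Q with the trees as variables;
  its basis consists of the forests (monomials), product of forests = disjoint union.\<close>
type_synonym H = "forest \<Rightarrow>\<^sub>0 rat"

text \<open>H_R tensor H_R, with basis the pairs of forests (M \<otimes> N).\<close>
type_synonym HH = "(forest \<times> forest) \<Rightarrow>\<^sub>0 rat"

primrec weight_tree :: "tree \<Rightarrow> nat" where
  "weight_tree (Node C) = 1 + sum_mset (image_mset weight_tree C)"

definition weight :: "forest \<Rightarrow> nat" where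
  "weight F = sum_mset (image_mset weight_tree F)"

text \<open>Cartesian product of a multiset of multisets (choosing one element from each).\<close>
definition mprod_step :: "'a multiset \<Rightarrow> 'a multiset multiset \<Rightarrow> 'a multiset multiset" where
  "mprod_step A X = \<Sum>\<^sub># (image_mset (\<lambda>a. image_mset (add_mset a) X) A)"

definition mprod :: "'a multiset multiset \<Rightarrow> 'a multiset multiset" where
  "mprod Ms = fold_mset mprod_step {#{#}#} Ms"

text \<open>cuts t: the multiset, over all admissible edge sets C of t
  INCLUDING the empty one, of the pairs (P^C(t), R^C(t)).  For every edge from the root
  to a child c, either this edge is cut (then, by admissibility, no edge below it is cut,
  and the whole subtree c goes to P), or it is not cut and the edges of c are an
  admissible (possibly empty) cut of c.\<close>
primrec cuts :: "tree \<Rightarrow> (forest \<times> tree) multiset" where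
  "cuts (Node C) =
     image_mset (\<lambda>S. (\<Sum>\<^sub># (image_mset fst S), Node (image_mset the (filter_mset (\<lambda>x. x \<noteq> None) (image_mset snd S)))))
       (mprod (image_mset (\<lambda>c. add_mset ({#c#}, None) (image_mset (\<lambda>(P, R). (P, Some R)) (cuts c))) C))"

definition forest :: "forest \<Rightarrow> H" where
  "forest F = Poly_Mapping.single F 1"

definition scal :: "rat \<Rightarrow> ('a \<Rightarrow>\<^sub>0 rat) \<Rightarrow> ('a \<Rightarrow>\<^sub>0 rat)" where
  "scal a x = Poly_Mapping.map (\<lambda>c. a * c) x"

definition tensor :: "H \<Rightarrow> H \<Rightarrow> HH" where
  "tensor x y = (\<Sum>M\<in>Poly_Mapping.keys x. \<Sum>N\<in>Poly_Mapping.keys y.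
      Poly_Mapping.single (M, N) (Poly_Mapping.lookup x M * Poly_Mapping.lookup y N))"

text \<open>On a tree: 1\<otimes>t + t\<otimes>1 + sum over nonempty admissible cuts of P^C(t)\<otimes>R^C(t).
  The nonempty cuts are exactly those with P^C(t) \<noteq> 1.\<close>
definition Delta_tree :: "tree \<Rightarrow> HH" where
  "Delta_tree t = Poly_Mapping.single ({#}, {#t#}) 1 + Poly_Mapping.single ({#t#}, {#}) 1
     + (\<Sum>(P, R) \<in># filter_mset (\<lambda>(P, R). P \<noteq> {#}) (cuts t). Poly_Mapping.single (P, {#R#}) 1)"

definition Delta_forest :: "forest \<Rightarrow> HH" where
  "Delta_forest F = prod_mset (image_mset Delta_tree F)"

definition Delta :: "H \<Rightarrow> HH" where
  "Delta x = (\<Sum>F\<in>Poly_Mapping.keys x. scal (Poly_Mapping.lookup x F) (Delta_forest F))"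

definition rDelta :: "H \<Rightarrow> HH" where
  "rDelta x = Delta x - tensor 1 x - tensor x 1"

definition primitive :: "H \<Rightarrow> bool" where
  "primitive x \<longleftrightarrow> rDelta x = 0"

text \<open>graft_tree M t: multiset over the vertices v of t of the tree obtained
  by attaching every tree of M to v.\<close>
primrec graft_tree :: "forest \<Rightarrow> tree \<Rightarrow> tree multiset" where
  "graft_tree M (Node C) = add_mset (Node (C + M))
     (\<Sum>\<^sub># (image_mset (\<lambda>c. image_mset (\<lambda>t'. Node (add_mset t' (C - {#c#}))) (graft_tree M c)) C))"

text \<open>Multiset over the vertices v of the forest N of the forests N_v.\<close>
definition graft :: "forest \<Rightarrow> forest \<Rightarrow> forest multiset" where
  "graft M N = \<Sum>\<^sub># (image_mset (\<lambda>t. image_mset (\<lambda>t'. add_mset t' (N - {#t#})) (graft_tree M t)) N)"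

definition top_forest :: "forest \<Rightarrow> forest \<Rightarrow> H" where
  "top_forest M N = (if N = {#} then 0
     else scal (1 / of_nat (weight N)) (\<Sum>N'\<in>#graft M N. forest N'))"

definition top :: "H \<Rightarrow> H \<Rightarrow> H" where
  "top x y = (\<Sum>M\<in>Poly_Mapping.keys x. \<Sum>N\<in>Poly_Mapping.keys y. scal (Poly_Mapping.lookup x M * Poly_Mapping.lookup y N) (top_forest M N))"

text \<open>itop p k n = p_(k+n) top ... top p_k, nested to the left:
  p_(k+n) top ... top p_k = (p_(k+n) top ... top p_(k+1)) top p_k.\<close>
fun itop :: "(nat \<Rightarrow> H) \<Rightarrow> nat \<Rightarrow> nat \<Rightarrow> H" where
  "itop p k 0 = p k"
| "itop p k (Suc n) = top (itop p (Suc k) n) (p k)"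

end

theory Submission
  imports Defs
begin


lemma lookup_scal [simp]: "Poly_Mapping.lookup (scal c x) k = c * Poly_Mapping.lookup x k"
  unfolding scal_def by (simp add: Poly_Mapping.map.rep_eq when_def)

lemma scal_add_right: "scal c (x + y) = scal c x + scal c y"
  by (rule poly_mapping_eqI) (simp add: lookup_add algebra_simps)
lemma scal_add_left: "scal (a + b) x = scal a x + scal b x"
  by (rule poly_mapping_eqI) (simp add: lookup_add algebra_simps)
lemma scal_scal [simp]: "scal a (scal b x) = scal (a * b) x"
  by (rule poly_mapping_eqI) (simp add: algebra_simps)
lemma scal_0 [simp]: "scal 0 x = 0"
  by (rule poly_mapping_eqI) simp
lemma scal_zero [simp]: "scal c 0 = 0"
  by (rule poly_mapping_eqI) simp
lemma scal_1 [simp]: "scal 1 x = x"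
  by (rule poly_mapping_eqI) simp
lemma scal_single [simp]: "scal c (Poly_Mapping.single k d) = Poly_Mapping.single k (c * d)"
  by (rule poly_mapping_eqI) (simp add: lookup_single when_def)
lemma scal_minus: "scal c (- x) = - scal c x"
  by (rule poly_mapping_eqI) simp
lemma scal_diff: "scal c (x - y) = scal c x - scal c y"
  by (rule poly_mapping_eqI) (simp add: lookup_minus algebra_simps)
lemma scal_sum: "scal c (sum f A) = (\<Sum>a\<in>A. scal c (f a))"
  by (induction A rule: infinite_finite_induct) (auto simp: scal_add_right)
lemma scal_sum_mset: "scal c (\<Sum>a\<in>#A. f a) = (\<Sum>a\<in>#A. scal c (f a))"
  by (induction A) (auto simp: scal_add_right)
lemma scal_conv: "scal c x = Poly_Mapping.single 0 c * x"
  unfolding scal_def by (rule mult_map_scale_conv_mult)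
lemma scal_mult_left: "scal c (x * y) = scal c x * (y :: ('a::comm_monoid_add \<Rightarrow>\<^sub>0 rat))"
  by (simp add: scal_conv mult.assoc)
lemma scal_mult_right: "scal c (x * y) = x * scal c (y :: ('a::comm_monoid_add \<Rightarrow>\<^sub>0 rat))"
  by (simp add: scal_conv mult.left_commute)

definition lin :: "('a \<Rightarrow> ('b \<Rightarrow>\<^sub>0 rat)) \<Rightarrow> ('a \<Rightarrow>\<^sub>0 rat) \<Rightarrow> ('b \<Rightarrow>\<^sub>0 rat)" where
  "lin f x = (\<Sum>k\<in>Poly_Mapping.keys x. scal (Poly_Mapping.lookup x k) (f k))"

lemma lin_superset:
  assumes "finite S" "Poly_Mapping.keys x \<subseteq> S"
  shows "lin f x = (\<Sum>k\<in>S. scal (Poly_Mapping.lookup x k) (f k))"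
  unfolding lin_def
  by (rule sum.mono_neutral_left) (use assms in \<open>auto simp: in_keys_iff\<close>)

lemma lin_add: "lin f (x + y) = lin f x + lin f y"
proof -
  let ?S = "Poly_Mapping.keys x \<union> Poly_Mapping.keys y"
  have "lin f (x + y) = (\<Sum>k\<in>?S. scal (Poly_Mapping.lookup (x + y) k) (f k))"
    by (rule lin_superset) (auto simp: keys_add)
  also have "\<dots> = (\<Sum>k\<in>?S. scal (Poly_Mapping.lookup x k) (f k)) + (\<Sum>k\<in>?S. scal (Poly_Mapping.lookup y k) (f k))"
    by (simp add: lookup_add scal_add_left sum.distrib)
  also have "\<dots> = lin f x + lin f y"
    using lin_superset[of ?S x f] lin_superset[of ?S y f] by simp
  finally show ?thesis .
qed

lemma keys_scal: "Poly_Mapping.keys (scal c x) \<subseteq> Poly_Mapping.keys x"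
  by (auto simp: in_keys_iff)

lemma lin_scal: "lin f (scal c x) = scal c (lin f x)"
proof -
  have "lin f (scal c x) = (\<Sum>k\<in>Poly_Mapping.keys x. scal (Poly_Mapping.lookup (scal c x) k) (f k))"
    by (rule lin_superset) (auto simp: keys_scal)
  then show ?thesis by (simp add: lin_def scal_sum)
qed

lemma lin_zero [simp]: "lin f 0 = 0"
  by (simp add: lin_def)

lemma lin_single [simp]: "lin f (Poly_Mapping.single k c) = scal c (f k)"
  by (cases "c = 0") (simp_all add: lin_def)

lemma lin_minus: "lin f (- x) = - lin f x"
proof -
  have "lin f x + lin f (- x) = 0" using lin_add[of f x "- x"] by simp
  then show ?thesis by (simp add: add_eq_0_iff2)
qed

lemma lin_diff: "lin f (x - y) = lin f x - lin f y"
  using lin_add[of f x "- y"] lin_minus[of f y] by simp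

lemma lin_sum: "lin f (sum g A) = (\<Sum>a\<in>A. lin f (g a))"
  by (induction A rule: infinite_finite_induct) (auto simp: lin_add)

lemma lin_sum_mset: "lin f (\<Sum>a\<in>#A. g a) = (\<Sum>a\<in>#A. lin f (g a))"
  by (induction A) (auto simp: lin_add)

lemma lin_cong: "(\<And>k. k \<in> Poly_Mapping.keys x \<Longrightarrow> f k = g k) \<Longrightarrow> lin f x = lin g x"
  by (simp add: lin_def)

lemma lin_fun_add: "lin (\<lambda>k. f k + g k) x = lin f x + lin g x"
  by (simp add: lin_def scal_add_right sum.distrib)

lemma lin_fun_zero [simp]: "lin (\<lambda>k. 0) x = 0"
  by (simp add: lin_def)

lemma lin_fun_scal: "lin (\<lambda>k. scal c (f k)) x = scal c (lin f x)"
  by (simp add: lin_def scal_sum mult.commute)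

lemma lin_fun_minus: "lin (\<lambda>k. - f k) x = - lin f x"
  by (simp add: lin_def scal_minus sum_negf)

lemma lin_fun_diff: "lin (\<lambda>k. f k - g k) x = lin f x - lin g x"
  by (simp add: lin_def scal_diff sum_subtractf)

lemma lin_fun_sum: "lin (\<lambda>k. \<Sum>a\<in>A. f a k) x = (\<Sum>a\<in>A. lin (f a) x)"
  by (induction A rule: infinite_finite_induct) (auto simp: lin_fun_add)

lemma lin_fun_sum_mset: "lin (\<lambda>k. \<Sum>a\<in>#A. f a k) x = (\<Sum>a\<in>#A. lin (f a) x)"
  by (induction A) (auto simp: lin_fun_add)

lemma lin_id: "lin (\<lambda>k. Poly_Mapping.single k 1) x = x"
proof (rule poly_mapping_eqI)
  fix j
  show "Poly_Mapping.lookup (lin (\<lambda>k. Poly_Mapping.single k 1) x) j = Poly_Mapping.lookup x j"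
    unfolding lin_def lookup_sum
    by (simp add: lookup_single when_def in_keys_iff)
qed

definition islin :: "(('a \<Rightarrow>\<^sub>0 rat) \<Rightarrow> ('b \<Rightarrow>\<^sub>0 rat)) \<Rightarrow> bool" where
  "islin F \<longleftrightarrow> (\<forall>x y. F (x + y) = F x + F y) \<and> (\<forall>c x. F (scal c x) = scal c (F x))"

lemma islin_lin [simp]: "islin (lin f)"
  by (simp add: islin_def lin_add lin_scal)

lemma islin_addD: "islin F \<Longrightarrow> F (x + y) = F x + F y"
  unfolding islin_def by (elim conjE allE) assumption

lemma islin_scalD: "islin F \<Longrightarrow> F (scal c x) = scal c (F x)"
  unfolding islin_def by (elim conjE allE) assumption

lemma islin_zero0: "islin F \<Longrightarrow> F 0 = 0"
proof -
  assume "islin F"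
  then have "F (scal 0 0) = scal 0 (F 0)" by (rule islin_scalD)
  then show ?thesis by simp
qed

lemma islin_sum: "islin F \<Longrightarrow> F (sum g A) = (\<Sum>a\<in>A. F (g a))"
proof (induction A rule: infinite_finite_induct)
  case (infinite A)
  then show ?case using islin_zero0[OF infinite(2)] by simp
next
  case empty
  then show ?case using islin_zero0[OF empty] by simp
next
  case (insert a A)
  have "F (g a + sum g A) = F (g a) + F (sum g A)" using \<open>islin F\<close> by (rule islin_addD)
  then show ?case using insert by simp
qed

lemma islin_ext: "islin F \<Longrightarrow> F x = lin (\<lambda>k. F (Poly_Mapping.single k 1)) x"
proof -
  assume F: "islin F"
  have "F x = F (lin (\<lambda>k. Poly_Mapping.single k 1) x)" by (simp add: lin_id)
  also have "\<dots> = (\<Sum>k\<in>Poly_Mapping.keys x. F (scal (Poly_Mapping.lookup x k) (Poly_Mapping.single k 1)))"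
    unfolding lin_def[of "\<lambda>k. Poly_Mapping.single k 1"] by (rule islin_sum[OF F])
  also have "\<dots> = lin (\<lambda>k. F (Poly_Mapping.single k 1)) x"
  proof -
    have "\<And>c k. F (scal c (Poly_Mapping.single k 1)) = scal c (F (Poly_Mapping.single k 1))"
      using F by (rule islin_scalD)
    then show ?thesis unfolding lin_def by (simp del: scal_single)
  qed
  finally show ?thesis .
qed

lemma islin_eqI:
  assumes "islin F" "islin G" "\<And>k. F (Poly_Mapping.single k 1) = G (Poly_Mapping.single k 1)"
  shows "F x = G x"
proof -
  have "F x = lin (\<lambda>k. F (Poly_Mapping.single k 1)) x" by (rule islin_ext[OF assms(1)])
  also have "\<dots> = lin (\<lambda>k. G (Poly_Mapping.single k 1)) x" using assms(3) by simp
  also have "\<dots> = G x" by (rule islin_ext[OF assms(2), symmetric])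
  finally show ?thesis .
qed

lemma islin_comp: "islin F \<Longrightarrow> islin G \<Longrightarrow> islin (\<lambda>x. F (G x))"
  by (simp add: islin_def)

lemma islin_add: "islin F \<Longrightarrow> islin G \<Longrightarrow> islin (\<lambda>x. F x + G x)"
  by (simp add: islin_def scal_add_right algebra_simps)

lemma islin_mult_left: "islin (\<lambda>x. x * (y::('a::comm_monoid_add \<Rightarrow>\<^sub>0 rat)))"
  by (simp add: islin_def distrib_right scal_mult_left)

lemma islin_mult_right: "islin (\<lambda>x. (y::('a::comm_monoid_add \<Rightarrow>\<^sub>0 rat)) * x)"
  by (simp add: islin_def distrib_left scal_mult_right)

lemmas islin_zero = islin_zero0

lemma islin_minus: "islin F \<Longrightarrow> F (- x) = - F x"
proof -
  assume F: "islin F"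
  have "F (x + - x) = F x + F (- x)" using F by (rule islin_addD)
  then have "F x + F (- x) = 0" using islin_zero0[OF F] by simp
  then show ?thesis by (subst eq_commute, subst neg_eq_iff_add_eq_0)
qed



lemma islin_diff: "islin F \<Longrightarrow> F (x - y) = F x - F y"
proof -
  assume F: "islin F"
  have "F (x + - y) = F x + F (- y)" using F by (rule islin_addD)
  then show ?thesis by (simp only: islin_minus[OF F] diff_conv_add_uminus)
qed

lemma lin_lin: "lin f (lin g x) = lin (\<lambda>k. lin f (g k)) x"
proof -
  have "islin (\<lambda>x. lin f (lin g x))" by (rule islin_comp) simp_all
  from islin_ext[OF this, of x] show ?thesis by (simp only: lin_single scal_1)
qed


lemma islin2_eqI:
  assumes "\<And>y. islin (\<lambda>x. F x y)" "\<And>x. islin (F x)" "\<And>y. islin (\<lambda>x. G x y)" "\<And>x. islin (G x)"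
    "\<And>a b. F (Poly_Mapping.single a 1) (Poly_Mapping.single b 1) = G (Poly_Mapping.single a 1) (Poly_Mapping.single b 1)"
  shows "F x y = G x y"
proof -
  have 1: "F (Poly_Mapping.single a 1) y = G (Poly_Mapping.single a 1) y" for a
    by (rule islin_eqI[OF assms(2) assms(4)]) (rule assms(5))
  have "(\<lambda>x. F x y) x = (\<lambda>x. G x y) x"
    by (rule islin_eqI[OF assms(1) assms(3)]) (simp add: 1)
  then show ?thesis by simp
qed

lemma islin_id: "islin (\<lambda>x. x)"
  by (simp add: islin_def)

lemma islin_const0: "islin (\<lambda>x. 0)"
  by (simp add: islin_def)

lemma islin_sub: "islin F \<Longrightarrow> islin G \<Longrightarrow> islin (\<lambda>x. F x - G x)"
  unfolding islin_def by (simp add: scal_diff algebra_simps)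

lemma tensor_lin: "tensor x y = lin (\<lambda>M. lin (\<lambda>N. Poly_Mapping.single (M, N) 1) y) x"
  unfolding tensor_def lin_def by (simp add: scal_sum)

lemma islin_tensor1: "islin (\<lambda>x. tensor x y)"
  unfolding tensor_lin by (rule islin_lin)

lemma islin_tensor2: "islin (tensor x)"
  by (simp add: islin_def tensor_lin lin_add lin_scal lin_fun_add lin_fun_scal)

lemma tensor_single [simp]: "tensor (Poly_Mapping.single a c) (Poly_Mapping.single b d) = Poly_Mapping.single (a, b) (c * d)"
  by (simp add: tensor_lin)

lemma tensor_add1: "tensor (x + y) z = tensor x z + tensor y z"
  using islin_tensor1 islin_addD by blast
lemma tensor_add2: "tensor z (x + y) = tensor z x + tensor z y"
  using islin_tensor2 islin_addD by blast
lemma tensor_diff1: "tensor (x - y) z = tensor x z - tensor y z"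
  using islin_tensor1 islin_diff by blast
lemma tensor_diff2: "tensor z (x - y) = tensor z x - tensor z y"
  using islin_tensor2 islin_diff by blast
lemma tensor_zero1 [simp]: "tensor 0 z = 0"
  using islin_tensor1 islin_zero by blast
lemma tensor_zero2 [simp]: "tensor z 0 = 0"
  using islin_tensor2 islin_zero by blast
lemma tensor_scal1: "tensor (scal c x) z = scal c (tensor x z)"
  using islin_tensor1 islin_scalD by blast
lemma tensor_scal2: "tensor z (scal c x) = scal c (tensor z x)"
  using islin_tensor2 islin_scalD by blast
lemma tensor_sum2: "tensor z (sum f A) = (\<Sum>a\<in>A. tensor z (f a))"
  using islin_tensor2 islin_sum by blast

lemma islin_compI: "islin F \<Longrightarrow> islin G \<Longrightarrow> H = (\<lambda>x. F (G x)) \<Longrightarrow> islin H"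
  using islin_comp by blast

lemma tensor_mult: "tensor x y * tensor u v = tensor (x * u) ((y * v) :: H)"
proof -
  have step: "tensor (Poly_Mapping.single a 1) y * tensor (Poly_Mapping.single c 1) v
      = tensor (Poly_Mapping.single a 1 * Poly_Mapping.single c 1) (y * v)" for a c and y v :: H
  proof (rule islin2_eqI[where F = "\<lambda>y v. tensor (Poly_Mapping.single a 1) y * tensor (Poly_Mapping.single c 1) v"
        and G = "\<lambda>y v. tensor (Poly_Mapping.single a 1 * Poly_Mapping.single c 1) (y * v)"])
    show "islin (\<lambda>y. tensor (Poly_Mapping.single a 1) y * tensor (Poly_Mapping.single c 1) v)" for v
      by (rule islin_compI[OF islin_mult_left islin_tensor2]) simp
    show "islin (\<lambda>v. tensor (Poly_Mapping.single a 1) y * tensor (Poly_Mapping.single c 1) v)" for y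
      by (rule islin_compI[OF islin_mult_right islin_tensor2]) simp
    show "islin (\<lambda>y. tensor (Poly_Mapping.single a 1 * Poly_Mapping.single c 1) (y * v))" for v
      by (rule islin_compI[OF islin_tensor2 islin_mult_left]) simp
    show "islin (\<lambda>v. tensor (Poly_Mapping.single a 1 * Poly_Mapping.single c 1) (y * v))" for y
      by (rule islin_compI[OF islin_tensor2 islin_mult_right]) simp
  qed (simp add: mult_single)
  show ?thesis
  proof (rule islin2_eqI[where F = "\<lambda>x u. tensor x y * tensor u v" and G = "\<lambda>x u. tensor (x * u) (y * v)"])
    show "islin (\<lambda>x. tensor x y * tensor u v)" for u
      by (rule islin_compI[OF islin_mult_left islin_tensor1]) simp
    show "islin (\<lambda>u. tensor x y * tensor u v)" for x
      by (rule islin_compI[OF islin_mult_right islin_tensor1]) simp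
    show "islin (\<lambda>x. tensor (x * u) (y * v))" for u
      by (rule islin_compI[OF islin_tensor1 islin_mult_left]) simp
    show "islin (\<lambda>u. tensor (x * u) (y * v))" for x
      by (rule islin_compI[OF islin_tensor1 islin_mult_right]) simp
  qed (rule step)
qed

lemma forest_mult: "forest A * forest B = forest (A + B)"
  by (simp add: forest_def mult_single)

lemma one_H: "(1::H) = forest {#}"
  by (simp add: forest_def)

lemma one_HH: "(1::HH) = Poly_Mapping.single ({#}, {#}) 1"
  by (metis single_one zero_prod_def)

lemma tensor_one_one: "tensor 1 1 = 1"
  by (simp only: one_H one_HH forest_def tensor_single mult_1)

lemma Delta_lin: "Delta x = lin Delta_forest x"
  unfolding Delta_def lin_def ..

lemma Delta_single [simp]: "Delta (Poly_Mapping.single F c) = scal c (Delta_forest F)"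
  by (simp add: Delta_lin)

lemma Delta_forest_plus: "Delta_forest (A + B) = Delta_forest A * Delta_forest B"
  by (simp add: Delta_forest_def)

lemma Delta_forest_empty [simp]: "Delta_forest {#} = 1"
  by (simp add: Delta_forest_def)

lemma Delta_forest_add_mset: "Delta_forest (add_mset t F) = Delta_tree t * Delta_forest F"
  by (simp add: Delta_forest_def)

lemma islin_Delta: "islin Delta"
  unfolding Delta_lin[abs_def] by (rule islin_lin)

lemma Delta_add: "Delta (x + y) = Delta x + Delta y"
  using islin_Delta islin_addD by blast
lemma Delta_diff: "Delta (x - y) = Delta x - Delta y"
  using islin_Delta islin_diff by blast

lemma Delta_mult: "Delta (x * y) = Delta x * Delta y"
proof (rule islin2_eqI[where F = "\<lambda>x y. Delta (x * y)" and G = "\<lambda>x y. Delta x * Delta y"])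
  show "islin (\<lambda>x. Delta (x * y))" for y
    by (rule islin_compI[OF islin_Delta islin_mult_left]) simp
  show "islin (\<lambda>y. Delta (x * y))" for x
    by (rule islin_compI[OF islin_Delta islin_mult_right]) simp
  show "islin (\<lambda>x. Delta x * Delta y)" for y
    by (rule islin_compI[OF islin_mult_left islin_Delta]) simp
  show "islin (\<lambda>y. Delta x * Delta y)" for x
    by (rule islin_compI[OF islin_mult_right islin_Delta]) simp
qed (simp add: mult_single Delta_forest_plus)

lemma Delta_one: "Delta 1 = 1"
  by (simp only: one_H forest_def Delta_single Delta_forest_empty scal_1)

lemma Delta_forest': "Delta (forest F) = Delta_forest F"
  by (simp add: forest_def)


lemma single00: "Poly_Mapping.single ({#}, {#}) (1::rat) = (1::HH)"
  by (metis single_one zero_prod_def)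

lemma image_mset_sum_mset_gen: "image_mset f (\<Sum>b\<in>#B. g b) = (\<Sum>b\<in>#B. image_mset f (g b))"
  by (induction B) auto

lemma sum_mset_Sum_gen: "(\<Sum>x\<in>#(\<Sum>a\<in>#A. g a). f x) = (\<Sum>a\<in>#A. \<Sum>x\<in>#g a. f x)"
  by (induction A) auto

lemma mprod_step_comm: "mprod_step A (mprod_step B X) = mprod_step B (mprod_step A X)"
proof -
  have "mprod_step A (mprod_step B X) = (\<Sum>a\<in>#A. \<Sum>b\<in>#B. image_mset (\<lambda>S. add_mset a (add_mset b S)) X)"
    by (simp add: mprod_step_def image_mset_sum_mset_gen image_mset.compositionality o_def)
  also have "\<dots> = (\<Sum>b\<in>#B. \<Sum>a\<in>#A. image_mset (\<lambda>S. add_mset a (add_mset b S)) X)"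
    by (rule sum_mset.swap)
  also have "\<dots> = mprod_step B (mprod_step A X)"
    by (simp add: mprod_step_def image_mset_sum_mset_gen image_mset.compositionality o_def add_mset_commute)
  finally show ?thesis .
qed

lemma cfc_mprod: "comp_fun_commute mprod_step"
  by unfold_locales (simp add: fun_eq_iff mprod_step_comm)

lemma mprod_add: "mprod (add_mset A Ms) = mprod_step A (mprod Ms)"
  by (simp add: mprod_def comp_fun_commute.fold_mset_add_mset[OF cfc_mprod])

lemma mprod_empty: "mprod {#} = {#{#}#}"
  by (simp add: mprod_def)

lemma mprod_sum:
  fixes \<phi> :: "'a \<Rightarrow> forest \<times> forest"
  shows "(\<Sum>S\<in>#mprod (image_mset h D). Poly_Mapping.single (\<Sum>b\<in>#S. \<phi> b) (1::rat))
        = (\<Prod>c\<in>#D. \<Sum>b\<in>#h c. Poly_Mapping.single (\<phi> b) 1)"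
proof (induction D)
  case empty
  then show ?case by (simp add: mprod_empty)
next
  case (add c D)
  let ?X = "mprod (image_mset h D)"
  have "(\<Sum>S\<in>#mprod (image_mset h (add_mset c D)). Poly_Mapping.single (\<Sum>b\<in>#S. \<phi> b) (1::rat))
      = (\<Sum>a\<in>#h c. \<Sum>S\<in>#?X. Poly_Mapping.single (\<phi> a + (\<Sum>b\<in>#S. \<phi> b)) (1::rat))"
    by (simp add: mprod_add mprod_step_def sum_mset_Sum_gen image_mset.compositionality o_def)
  also have "\<dots> = (\<Sum>a\<in>#h c. \<Sum>S\<in>#?X. Poly_Mapping.single (\<phi> a) 1 * Poly_Mapping.single (\<Sum>b\<in>#S. \<phi> b) (1::rat))"
    by (simp add: mult_single)
  also have "\<dots> = (\<Sum>a\<in>#h c. Poly_Mapping.single (\<phi> a) 1) * (\<Sum>S\<in>#?X. Poly_Mapping.single (\<Sum>b\<in>#S. \<phi> b) (1::rat))"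
    by (subst sum_mset_distrib_right) (simp add: sum_mset_distrib_left)
  also have "\<dots> = (\<Prod>c\<in>#add_mset c D. \<Sum>b\<in>#h c. Poly_Mapping.single (\<phi> b) 1)"
    using add by simp
  finally show ?case .
qed

definition E :: "tree \<Rightarrow> HH" where
  "E t = (\<Sum>x\<in>#cuts t. Poly_Mapping.single (fst x, {#snd x#}) 1)"

definition Rt :: "HH \<Rightarrow> HH" where
  "Rt = lin (\<lambda>k. Poly_Mapping.single (fst k, {#Node (snd k)#}) 1)"

definition R0 :: "HH \<Rightarrow> HH" where
  "R0 = lin (\<lambda>k. if fst k = {#} then Poly_Mapping.single k 1 else 0)"

definition opt :: "tree \<Rightarrow> (forest \<times> tree option) multiset" where
  "opt c = add_mset ({#c#}, None) (image_mset (\<lambda>(P, R). (P, Some R)) (cuts c))"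

definition oset :: "tree option \<Rightarrow> forest" where
  "oset oo = (case oo of None \<Rightarrow> {#} | Some R \<Rightarrow> {#R#})"

lemma somes_sum: "image_mset the (filter_mset (\<lambda>x. x \<noteq> None) (image_mset snd S)) = (\<Sum>b\<in>#S. oset (snd b))"
  by (induction S) (auto simp: oset_def split: option.split)

lemma cuts_Node': "cuts (Node C) = image_mset (\<lambda>S. (\<Sum>\<^sub># (image_mset fst S), Node (\<Sum>b\<in>#S. oset (snd b)))) (mprod (image_mset opt C))"
  by (simp only: cuts.simps somes_sum opt_def[abs_def])

lemma sum_mset_partition: "(\<Sum>x\<in>#filter_mset P M. f x) + (\<Sum>x\<in>#filter_mset (\<lambda>x. \<not> P x) M. f x) = (\<Sum>x\<in>#M. f x)"
  by (induction M) (auto simp: algebra_simps)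

lemma fst_sum_mset: "fst (\<Sum>b\<in>#S. f b) = (\<Sum>b\<in>#S. fst (f b))"
  by (induction S) auto

lemma snd_sum_mset: "snd (\<Sum>b\<in>#S. f b) = (\<Sum>b\<in>#S. snd (f b))"
  by (induction S) auto

lemma islin_Rt: "islin Rt"
  unfolding Rt_def by (rule islin_lin)

lemma islin_R0: "islin R0"
  unfolding R0_def by (rule islin_lin)

lemma Rt_single [simp]: "Rt (Poly_Mapping.single (P, F) c) = Poly_Mapping.single (P, {#Node F#}) c"
  by (simp add: Rt_def)

lemma R0_single: "R0 (Poly_Mapping.single k c) = (if fst k = {#} then Poly_Mapping.single k c else 0)"
  by (simp add: R0_def)

lemma Rt_sum_mset: "Rt (\<Sum>x\<in>#A. f x) = (\<Sum>x\<in>#A. Rt (f x))"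
  unfolding Rt_def by (rule lin_sum_mset)

lemma R0_sum_mset: "R0 (\<Sum>x\<in>#A. f x) = (\<Sum>x\<in>#A. R0 (f x))"
  unfolding R0_def by (rule lin_sum_mset)

lemma E_Node: "E (Node C) = Rt (\<Prod>c\<in>#C. Poly_Mapping.single ({#c#}, {#}) 1 + E c)"
proof -
  define \<phi> where "\<phi> b = (fst b, oset (snd b))" for b :: "forest \<times> tree option"
  have "E (Node C) = (\<Sum>S\<in>#mprod (image_mset opt C).
      Poly_Mapping.single (\<Sum>\<^sub># (image_mset fst S), {#Node (\<Sum>b\<in>#S. oset (snd b))#}) 1)"
    unfolding E_def cuts_Node' by (simp add: image_mset.compositionality o_def)
  also have "\<dots> = (\<Sum>S\<in>#mprod (image_mset opt C). Rt (Poly_Mapping.single (\<Sum>b\<in>#S. \<phi> b) 1))"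
    by (rule arg_cong[where f = sum_mset], rule image_mset_cong)
       (simp add: \<phi>_def fst_sum_mset snd_sum_mset Rt_def)
  also have "\<dots> = Rt (\<Sum>S\<in>#mprod (image_mset opt C). Poly_Mapping.single (\<Sum>b\<in>#S. \<phi> b) 1)"
    by (simp add: Rt_sum_mset)
  also have "\<dots> = Rt (\<Prod>c\<in>#C. \<Sum>b\<in>#opt c. Poly_Mapping.single (\<phi> b) 1)"
    by (simp add: mprod_sum)
  also have "(\<Prod>c\<in>#C. \<Sum>b\<in>#opt c. Poly_Mapping.single (\<phi> b) 1) = (\<Prod>c\<in>#C. Poly_Mapping.single ({#c#}, {#}) 1 + E c)"
    by (rule arg_cong[where f = prod_mset], rule image_mset_cong)
       (simp add: opt_def \<phi>_def oset_def E_def image_mset.compositionality o_def case_prod_unfold)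
  finally show ?thesis .
qed

lemma R0_mult: "R0 (X * Y) = R0 X * R0 Y"
proof (rule islin2_eqI[where F = "\<lambda>x y. R0 (x * y)" and G = "\<lambda>x y. R0 x * R0 y"])
  show "islin (\<lambda>x. R0 (x * y))" for y
    by (rule islin_compI[OF islin_R0 islin_mult_left]) simp
  show "islin (\<lambda>y. R0 (x * y))" for x
    by (rule islin_compI[OF islin_R0 islin_mult_right]) simp
  show "islin (\<lambda>x. R0 x * R0 y)" for y
    by (rule islin_compI[OF islin_mult_left islin_R0]) simp
  show "islin (\<lambda>y. R0 x * R0 y)" for x
    by (rule islin_compI[OF islin_mult_right islin_R0]) simp
qed (auto simp: mult_single R0_single)

lemma R0_one: "R0 1 = 1"
proof -
  have "R0 (Poly_Mapping.single ({#}, {#}) 1) = Poly_Mapping.single ({#}, {#}) 1" by (simp add: R0_single)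
  then show ?thesis by (simp add: one_HH[symmetric])
qed

lemma R0_prod: "R0 (\<Prod>c\<in>#D. f c) = (\<Prod>c\<in>#D. R0 (f c))"
  by (induction D) (simp_all add: R0_one R0_mult)

lemma R0_Rt: "R0 (Rt X) = Rt (R0 X)"
proof (rule islin_eqI[where F = "\<lambda>X. R0 (Rt X)" and G = "\<lambda>X. Rt (R0 X)"])
  show "islin (\<lambda>X. R0 (Rt X))" by (rule islin_comp[OF islin_R0 islin_Rt])
  show "islin (\<lambda>X. Rt (R0 X))" by (rule islin_comp[OF islin_Rt islin_R0])
  fix k :: "forest \<times> forest"
  show "R0 (Rt (Poly_Mapping.single k 1)) = Rt (R0 (Poly_Mapping.single k 1))"
    by (cases k) (simp add: R0_single islin_zero[OF islin_Rt])
qed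

lemma prod_single_snd: "(\<Prod>c\<in>#D. Poly_Mapping.single ({#}, {#c#}) (1::rat)) = (Poly_Mapping.single ({#}, D) 1 :: HH)"
proof (induction D)
  case empty
  then show ?case by (simp add: single00)
next
  case (add c D)
  then show ?case by (simp add: mult_single)
qed

lemma R0_E: "R0 (E t) = Poly_Mapping.single ({#}, {#t#}) 1"
proof (induction t)
  case (Node D)
  have "R0 (E (Node D)) = Rt (\<Prod>c\<in>#D. R0 (Poly_Mapping.single ({#c#}, {#}) 1 + E c))"
    by (simp add: E_Node R0_Rt R0_prod)
  also have "(\<Prod>c\<in>#D. R0 (Poly_Mapping.single ({#c#}, {#}) 1 + E c)) = (\<Prod>c\<in>#D. Poly_Mapping.single ({#}, {#c#}) (1::rat))"
    by (rule arg_cong[where f = prod_mset], rule image_mset_cong)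
       (simp add: islin_addD[OF islin_R0] R0_single Node)
  finally show ?case by (simp add: prod_single_snd)
qed

lemma sum_mset_filter_if: "(\<Sum>x\<in>#filter_mset P M. f x) = (\<Sum>x\<in>#M. if P x then f x else 0)"
  by (induction M) auto

lemma Delta_tree_E: "Delta_tree t = Poly_Mapping.single ({#t#}, {#}) 1 + E t"
proof -
  let ?f = "\<lambda>x. Poly_Mapping.single (fst x, {#snd x#}) (1::rat)"
  have part: "E t = (\<Sum>x\<in>#filter_mset (\<lambda>x. fst x = {#}) (cuts t). ?f x) + (\<Sum>x\<in>#filter_mset (\<lambda>x. fst x \<noteq> {#}) (cuts t). ?f x)"
    unfolding E_def by (rule sum_mset_partition[symmetric])
  have "R0 (E t) = (\<Sum>x\<in>#filter_mset (\<lambda>x. fst x = {#}) (cuts t). ?f x)"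
    unfolding E_def R0_sum_mset sum_mset_filter_if by (simp add: R0_single)
  then have "(\<Sum>x\<in>#filter_mset (\<lambda>x. fst x = {#}) (cuts t). ?f x) = Poly_Mapping.single ({#}, {#t#}) 1"
    by (simp add: R0_E)
  with part have "E t = Poly_Mapping.single ({#}, {#t#}) 1 + (\<Sum>x\<in>#filter_mset (\<lambda>x. fst x \<noteq> {#}) (cuts t). ?f x)"
    by simp
  then show ?thesis
    unfolding Delta_tree_def by (simp add: case_prod_unfold)
qed

lemma Delta_tree_Node: "Delta_tree (Node D) = Poly_Mapping.single ({#Node D#}, {#}) 1 + Rt (Delta_forest D)"
proof -
  have "Delta_forest D = (\<Prod>c\<in>#D. Poly_Mapping.single ({#c#}, {#}) 1 + E c)"
    unfolding Delta_forest_def by (rule arg_cong[where f = prod_mset], rule image_mset_cong) (simp add: Delta_tree_E)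
  then show ?thesis by (simp add: Delta_tree_E E_Node)
qed


definition Bp :: "H \<Rightarrow> H" where
  "Bp = lin (\<lambda>F. forest {#Node F#})"

definition gr :: "forest \<Rightarrow> H \<Rightarrow> H" where
  "gr M = lin (\<lambda>N. \<Sum>N'\<in>#graft M N. forest N')"

definition idT :: "(H \<Rightarrow> H) \<Rightarrow> HH \<Rightarrow> HH" where
  "idT f = lin (\<lambda>k. tensor (forest (fst k)) (f (forest (snd k))))"

definition Tid :: "(H \<Rightarrow> H) \<Rightarrow> HH \<Rightarrow> HH" where
  "Tid f = lin (\<lambda>k. tensor (f (forest (fst k))) (forest (snd k)))"

definition Psi :: "HH \<Rightarrow> HH \<Rightarrow> HH" where
  "Psi X Y = lin (\<lambda>k. lin (\<lambda>l. tensor (forest (fst k + fst l)) (gr (snd k) (forest (snd l)))) Y) X"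

lemma islin_Bp: "islin Bp" unfolding Bp_def by (rule islin_lin)
lemma islin_gr: "islin (gr M)" unfolding gr_def by (rule islin_lin)
lemma islin_idT: "islin (idT f)" unfolding idT_def by (rule islin_lin)
lemma islin_Tid: "islin (Tid f)" unfolding Tid_def by (rule islin_lin)
lemma islin_Psi1: "islin (\<lambda>X. Psi X Y)" unfolding Psi_def by (rule islin_lin)
lemma islin_Psi2: "islin (Psi X)"
  unfolding islin_def Psi_def by (simp add: lin_add lin_scal lin_fun_add lin_fun_scal)

lemma Bp_forest [simp]: "Bp (forest F) = forest {#Node F#}"
  by (simp add: Bp_def forest_def)

lemma gr_forest: "gr M (forest N) = (\<Sum>N'\<in>#graft M N. forest N')"
  by (simp add: gr_def forest_def)

lemma idT_single: "idT f (Poly_Mapping.single k 1) = tensor (forest (fst k)) (f (forest (snd k)))"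
  by (simp add: idT_def)

lemma Tid_single: "Tid f (Poly_Mapping.single k 1) = tensor (f (forest (fst k))) (forest (snd k))"
  by (simp add: Tid_def)

lemma Psi_single: "Psi (Poly_Mapping.single k 1) (Poly_Mapping.single l 1)
    = tensor (forest (fst k + fst l)) (gr (snd k) (forest (snd l)))"
  by (simp add: Psi_def)

lemma tensor_forest: "tensor (forest A) (forest B) = Poly_Mapping.single (A, B) 1"
  by (simp add: forest_def)

lemma forest_single: "Poly_Mapping.single A 1 = forest A"
  by (simp add: forest_def)

lemma graft_empty [simp]: "graft M {#} = {#}"
  by (simp add: graft_def)

lemma gr_one: "gr M 1 = 0"
proof -
  have "gr M (forest {#}) = 0" by (simp add: gr_forest)
  then show ?thesis by (simp add: forest_def)
qed

lemma sum_mset_cong_mem: "(\<And>x. x \<in># M \<Longrightarrow> f x = g x) \<Longrightarrow> (\<Sum>x\<in>#M. f x) = (\<Sum>x\<in>#M. g x)"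
  by (metis image_mset_cong)

lemma diff_left_mem: "t \<in># A \<Longrightarrow> A + B - {#t#} = A - {#t#} + B"
  by (metis add_mset_remove_trivial insert_DiffM union_mset_add_mset_left)

lemma diff_right_mem: "t \<in># B \<Longrightarrow> A + B - {#t#} = A + (B - {#t#})"
  by (metis add_mset_remove_trivial insert_DiffM union_mset_add_mset_right)

lemma graft_plus: "graft M (A + B) = image_mset (\<lambda>X. X + B) (graft M A) + image_mset (\<lambda>X. A + X) (graft M B)"
proof -
  have 1: "(\<Sum>t\<in>#A. image_mset (\<lambda>t'. add_mset t' (A + B - {#t#})) (graft_tree M t))
      = (\<Sum>t\<in>#A. image_mset (\<lambda>X. X + B) (image_mset (\<lambda>t'. add_mset t' (A - {#t#})) (graft_tree M t)))"
  proof (rule sum_mset_cong_mem)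
    fix x assume "x \<in># A"
    then have e: "A + B - {#x#} = A - {#x#} + B" by (rule diff_left_mem)
    show "image_mset (\<lambda>t'. add_mset t' (A + B - {#x#})) (graft_tree M x) =
          image_mset (\<lambda>X. X + B) (image_mset (\<lambda>t'. add_mset t' (A - {#x#})) (graft_tree M x))"
      by (simp only: e image_mset.compositionality o_def union_mset_add_mset_left)
  qed
  have 2: "(\<Sum>t\<in>#B. image_mset (\<lambda>t'. add_mset t' (A + B - {#t#})) (graft_tree M t))
      = (\<Sum>t\<in>#B. image_mset (\<lambda>X. A + X) (image_mset (\<lambda>t'. add_mset t' (B - {#t#})) (graft_tree M t)))"
  proof (rule sum_mset_cong_mem)
    fix x assume "x \<in># B"
    then have e: "A + B - {#x#} = A + (B - {#x#})" by (rule diff_right_mem)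
    show "image_mset (\<lambda>t'. add_mset t' (A + B - {#x#})) (graft_tree M x) =
          image_mset (\<lambda>X. A + X) (image_mset (\<lambda>t'. add_mset t' (B - {#x#})) (graft_tree M x))"
      by (simp only: e image_mset.compositionality o_def union_mset_add_mset_right)
  qed
  show ?thesis
    unfolding graft_def image_mset_union sum_mset.union 1 2 image_mset_sum_mset_gen ..
qed

lemma gr_forest_plus: "gr M (forest (A + B)) = gr M (forest A) * forest B + forest A * gr M (forest B)"
  by (simp add: gr_forest graft_plus sum_mset_distrib_left sum_mset_distrib_right forest_mult
      image_mset.compositionality o_def add.commute)

lemma gr_mult: "gr M (x * y) = gr M x * y + x * gr M y"
proof (rule islin2_eqI[where F = "\<lambda>x y. gr M (x * y)" and G = "\<lambda>x y. gr M x * y + x * gr M y"])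
  show "islin (\<lambda>x. gr M (x * y))" for y
    by (rule islin_compI[OF islin_gr islin_mult_left]) simp
  show "islin (\<lambda>y. gr M (x * y))" for x
    by (rule islin_compI[OF islin_gr islin_mult_right]) simp
  show "islin (\<lambda>x. gr M x * y + x * gr M y)" for y
    by (rule islin_add[OF islin_compI[OF islin_mult_left islin_gr] islin_mult_left]) simp
  show "islin (\<lambda>y. gr M x * y + x * gr M y)" for x
    by (rule islin_add[OF islin_mult_right islin_compI[OF islin_mult_right islin_gr]]) simp
  fix a b :: forest
  show "gr M (Poly_Mapping.single a 1 * Poly_Mapping.single b 1) =
        gr M (Poly_Mapping.single a 1) * Poly_Mapping.single b 1 + Poly_Mapping.single a 1 * gr M (Poly_Mapping.single b 1)"
    using gr_forest_plus[of M a b] by (simp add: forest_def mult_single)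
qed

lemma graft_single: "graft M {#t#} = image_mset (\<lambda>t'. {#t'#}) (graft_tree M t)"
  by (simp add: graft_def)

lemma gr_tree: "gr M (forest {#Node C#}) = forest {#Node (C + M)#} + Bp (gr M (forest C))"
proof -
  have "Bp (gr M (forest C)) = (\<Sum>N'\<in>#graft M C. forest {#Node N'#})"
    unfolding gr_forest Bp_def lin_sum_mset by (simp add: forest_def)
  also have "\<dots> = (\<Sum>c\<in>#C. \<Sum>t'\<in>#graft_tree M c. forest {#Node (add_mset t' (C - {#c#}))#})"
    by (simp add: graft_def sum_mset_Sum_gen image_mset.compositionality o_def)
  finally show ?thesis
    by (simp add: gr_forest graft_single sum_mset_Sum_gen image_mset.compositionality o_def)
qed

lemma rep_plus: "replicate_mset (a + b) x = replicate_mset a x + replicate_mset b x"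
  by (induction a) auto

lemma replicate_sum: "(\<Sum>c\<in>#C. replicate_mset (f c) x) = replicate_mset (\<Sum>c\<in>#C. f c) x"
  by (induction C) (auto simp: rep_plus)

lemma graft_tree_empty: "graft_tree {#} t = replicate_mset (weight_tree t) t"
proof (induction t)
  case (Node C)
  have "(\<Sum>c\<in>#C. image_mset (\<lambda>t'. Node (add_mset t' (C - {#c#}))) (graft_tree {#} c))
      = (\<Sum>c\<in>#C. replicate_mset (weight_tree c) (Node C))"
    by (rule sum_mset_cong_mem) (simp add: Node insert_DiffM)
  then show ?case by (simp add: replicate_sum)
qed

lemma graft_empty_left: "graft {#} N = replicate_mset (weight N) N"
proof -
  have "graft {#} N = (\<Sum>t\<in>#N. replicate_mset (weight_tree t) N)"
    unfolding graft_def by (rule sum_mset_cong_mem) (simp add: graft_tree_empty insert_DiffM)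
  then show ?thesis by (simp add: replicate_sum weight_def)
qed

lemma sum_replicate_forest: "(\<Sum>N'\<in>#replicate_mset n N. forest N') = Poly_Mapping.single N (of_nat n)"
proof (induction n)
  case 0
  then show ?case by simp
next
  case (Suc n)
  have "(\<Sum>N'\<in>#replicate_mset (Suc n) N. forest N') = forest N + (\<Sum>N'\<in>#replicate_mset n N. forest N')"
    by (simp only: replicate_mset_Suc image_mset_add_mset sum_mset.add_mset)
  also have "\<dots> = forest N + Poly_Mapping.single N (of_nat n)"
    by (simp only: Suc)
  also have "\<dots> = Poly_Mapping.single N (of_nat (Suc n))"
    by (simp only: forest_def single_add[symmetric] of_nat_Suc)
  finally show ?case .
qed

lemma gr_empty_forest: "gr {#} (forest N) = Poly_Mapping.single N (of_nat (weight N))"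
  by (simp only: gr_forest graft_empty_left sum_replicate_forest)

lemma weight_tree_pos: "weight_tree t \<ge> 1"
  by (cases t) simp

lemma weight_eq_0: "weight N = 0 \<longleftrightarrow> N = {#}"
proof (cases N)
  case empty
  then show ?thesis by (simp add: weight_def)
next
  case (add t N')
  have "weight N = weight_tree t + weight N'" unfolding add by (simp add: weight_def)
  then have "weight N \<noteq> 0" using weight_tree_pos[of t] by linarith
  moreover have "N \<noteq> {#}" using add by simp
  ultimately show ?thesis by simp
qed

lemma weight_plus: "weight (A + B) = weight A + weight B"
  by (simp add: weight_def)

lemma weight_single [simp]: "weight {#t#} = weight_tree t"
  by (simp add: weight_def)

lemma weight_empty [simp]: "weight {#} = 0"
  by (simp add: weight_def)


lemma tensor_1_single: "tensor (Poly_Mapping.single c a) 1 = Poly_Mapping.single (c, {#}) a"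
  by (simp only: one_H forest_def tensor_single mult_1_right)

lemma tensor_forest_1: "tensor (forest c) 1 = Poly_Mapping.single (c, {#}) 1"
  by (simp only: forest_def tensor_1_single)

lemma one_single_tensor: "tensor 1 (Poly_Mapping.single c a) = Poly_Mapping.single ({#}, c) a"
  by (simp only: one_H forest_def tensor_single mult_1)

lemma idT_tensor: "islin f \<Longrightarrow> idT f (tensor u v) = tensor u (f v)"
proof (rule islin2_eqI[where F = "\<lambda>u v. idT f (tensor u v)" and G = "\<lambda>u v. tensor u (f v)"])
  assume f: "islin f"
  show "islin (\<lambda>u. idT f (tensor u v))" for v
    by (rule islin_compI[OF islin_idT islin_tensor1]) simp
  show "islin (\<lambda>v. idT f (tensor u v))" for u
    by (rule islin_compI[OF islin_idT islin_tensor2]) simp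
  show "islin (\<lambda>u. tensor u (f v))" for v
    by (rule islin_tensor1)
  show "islin (\<lambda>v. tensor u (f v))" for u
    by (rule islin_compI[OF islin_tensor2 f]) simp
qed (simp add: idT_single forest_single tensor_forest)

lemma Tid_tensor: "islin f \<Longrightarrow> Tid f (tensor u v) = tensor (f u) v"
proof (rule islin2_eqI[where F = "\<lambda>u v. Tid f (tensor u v)" and G = "\<lambda>u v. tensor (f u) v"])
  assume f: "islin f"
  show "islin (\<lambda>u. Tid f (tensor u v))" for v
    by (rule islin_compI[OF islin_Tid islin_tensor1]) simp
  show "islin (\<lambda>v. Tid f (tensor u v))" for u
    by (rule islin_compI[OF islin_Tid islin_tensor2]) simp
  show "islin (\<lambda>u. tensor (f u) v)" for v
    by (rule islin_compI[OF islin_tensor1 f]) simp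
  show "islin (\<lambda>v. tensor (f u) v)" for u
    by (rule islin_tensor2)
qed (simp add: Tid_single forest_single tensor_forest)

lemma Rt_idT: "Rt X = idT Bp X"
proof (rule islin_eqI[OF islin_Rt islin_idT])
  fix k :: "forest \<times> forest"
  show "Rt (Poly_Mapping.single k 1) = idT Bp (Poly_Mapping.single k 1)"
    by (cases k) (simp add: idT_single tensor_forest)
qed

lemma cocycle: "Delta (Bp x) = tensor (Bp x) 1 + idT Bp (Delta x)"
proof (rule islin_eqI[where F = "\<lambda>x. Delta (Bp x)" and G = "\<lambda>x. tensor (Bp x) 1 + idT Bp (Delta x)"])
  show "islin (\<lambda>x. Delta (Bp x))" by (rule islin_comp[OF islin_Delta islin_Bp])
  show "islin (\<lambda>x. tensor (Bp x) 1 + idT Bp (Delta x))"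
    by (rule islin_add[OF islin_compI[OF islin_tensor1 islin_Bp] islin_comp[OF islin_idT islin_Delta]]) simp
  fix F :: forest
  have "Delta (Bp (Poly_Mapping.single F 1)) = Delta_tree (Node F)"
    by (simp add: forest_single Delta_forest' Delta_forest_add_mset)
  also have "\<dots> = tensor (Bp (Poly_Mapping.single F 1)) 1 + idT Bp (Delta (Poly_Mapping.single F 1))"
    by (simp add: Delta_tree_Node Rt_idT forest_single tensor_forest_1 Delta_forest')
  finally show "Delta (Bp (Poly_Mapping.single F 1)) = tensor (Bp (Poly_Mapping.single F 1)) 1 + idT Bp (Delta (Poly_Mapping.single F 1))" .
qed

lemma Delta_tree_Node': "Delta_tree (Node D) = tensor (forest {#Node D#}) 1 + idT Bp (Delta_forest D)"
  by (simp add: Delta_tree_Node Rt_idT tensor_forest_1)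

lemma Psi_P1: "Psi X (Y * Z) = Psi X Y * Z + Y * Psi X Z"
proof (rule islin_eqI[where F = "\<lambda>X. Psi X (Y * Z)" and G = "\<lambda>X. Psi X Y * Z + Y * Psi X Z"])
  show "islin (\<lambda>X. Psi X (Y * Z))" by (rule islin_Psi1)
  show "islin (\<lambda>X. Psi X Y * Z + Y * Psi X Z)"
    by (rule islin_add[OF islin_compI[OF islin_mult_left islin_Psi1] islin_compI[OF islin_mult_right islin_Psi1]]) simp_all
  fix k :: "forest \<times> forest"
  obtain a b where k: "k = (a, b)" by (cases k)
  show "Psi (Poly_Mapping.single k 1) (Y * Z) = Psi (Poly_Mapping.single k 1) Y * Z + Y * Psi (Poly_Mapping.single k 1) Z"
  proof (rule islin2_eqI[where F = "\<lambda>Y Z. Psi (Poly_Mapping.single k 1) (Y * Z)"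
        and G = "\<lambda>Y Z. Psi (Poly_Mapping.single k 1) Y * Z + Y * Psi (Poly_Mapping.single k 1) Z"])
    show "islin (\<lambda>Y. Psi (Poly_Mapping.single k 1) (Y * Z))" for Z
      by (rule islin_compI[OF islin_Psi2 islin_mult_left]) simp
    show "islin (\<lambda>Z. Psi (Poly_Mapping.single k 1) (Y * Z))" for Y
      by (rule islin_compI[OF islin_Psi2 islin_mult_right]) simp
    show "islin (\<lambda>Y. Psi (Poly_Mapping.single k 1) Y * Z + Y * Psi (Poly_Mapping.single k 1) Z)" for Z
      by (rule islin_add[OF islin_compI[OF islin_mult_left islin_Psi2] islin_mult_left]) simp
    show "islin (\<lambda>Z. Psi (Poly_Mapping.single k 1) Y * Z + Y * Psi (Poly_Mapping.single k 1) Z)" for Y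
      by (rule islin_add[OF islin_mult_right islin_compI[OF islin_mult_right islin_Psi2]]) simp
    fix l m :: "forest \<times> forest"
    obtain c d where l: "l = (c, d)" by (cases l)
    obtain e f where m: "m = (e, f)" by (cases m)
    have "Psi (Poly_Mapping.single k 1) (Poly_Mapping.single l 1 * Poly_Mapping.single m 1)
        = tensor (forest (a + c + e)) (gr b (forest d) * forest f + forest d * gr b (forest f))"
      by (simp add: k l m mult_single Psi_single forest_mult[symmetric] gr_mult add.assoc)
    also have "\<dots> = tensor (forest (a + c)) (gr b (forest d)) * tensor (forest e) (forest f)
        + tensor (forest c) (forest d) * tensor (forest (a + e)) (gr b (forest f))"
      by (simp add: tensor_mult forest_mult tensor_add2 add_ac)
    also have "\<dots> = Psi (Poly_Mapping.single k 1) (Poly_Mapping.single l 1) * Poly_Mapping.single m 1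
        + Poly_Mapping.single l 1 * Psi (Poly_Mapping.single k 1) (Poly_Mapping.single m 1)"
      by (simp add: k l m Psi_single tensor_forest)
    finally show "Psi (Poly_Mapping.single k 1) (Poly_Mapping.single l 1 * Poly_Mapping.single m 1)
        = Psi (Poly_Mapping.single k 1) (Poly_Mapping.single l 1) * Poly_Mapping.single m 1
        + Poly_Mapping.single l 1 * Psi (Poly_Mapping.single k 1) (Poly_Mapping.single m 1)" .
  qed
qed


lemma Psi_P2: "Psi X (tensor x 1) = 0"
proof (rule islin2_eqI[where F = "\<lambda>X x. Psi X (tensor x 1)" and G = "\<lambda>X x. 0"])
  show "islin (\<lambda>X. Psi X (tensor x 1))" for x by (rule islin_Psi1)
  show "islin (\<lambda>x. Psi X (tensor x 1))" for X
    by (rule islin_compI[OF islin_Psi2 islin_tensor1]) simp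
  show "islin (\<lambda>X. 0 :: HH)" by (rule islin_const0)
  show "islin (\<lambda>x. 0 :: HH)" by (rule islin_const0)
  fix k :: "forest \<times> forest" and c :: forest
  show "Psi (Poly_Mapping.single k 1) (tensor (Poly_Mapping.single c 1) 1) = 0"
    by (simp add: tensor_1_single Psi_single gr_forest)
qed

lemma Psi_one: "Psi X 1 = 0"
  using Psi_P2[of X 1] by (simp add: tensor_one_one)

lemma Tid_one: "islin f \<Longrightarrow> Tid f 1 = tensor (f 1) 1"
  using Tid_tensor[of f 1 1] by (simp add: tensor_one_one)

lemma Psi_P3: "Psi X (idT Bp Y) = idT Bp (X * Y + Psi X Y)"
proof (rule islin2_eqI[where F = "\<lambda>X Y. Psi X (idT Bp Y)" and G = "\<lambda>X Y. idT Bp (X * Y + Psi X Y)"])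
  show "islin (\<lambda>X. Psi X (idT Bp Y))" for Y by (rule islin_Psi1)
  show "islin (\<lambda>Y. Psi X (idT Bp Y))" for X
    by (rule islin_compI[OF islin_Psi2 islin_idT]) simp
  show "islin (\<lambda>X. idT Bp (X * Y + Psi X Y))" for Y
    by (rule islin_compI[OF islin_idT islin_add[OF islin_mult_left islin_Psi1]]) simp
  show "islin (\<lambda>Y. idT Bp (X * Y + Psi X Y))" for X
    by (rule islin_compI[OF islin_idT islin_add[OF islin_mult_right islin_Psi2]]) simp
  fix k l :: "forest \<times> forest"
  obtain a b where k: "k = (a, b)" by (cases k)
  obtain c d where l: "l = (c, d)" by (cases l)
  show "Psi (Poly_Mapping.single k 1) (idT Bp (Poly_Mapping.single l 1)) =
        idT Bp (Poly_Mapping.single k 1 * Poly_Mapping.single l 1 + Psi (Poly_Mapping.single k 1) (Poly_Mapping.single l 1))"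
    by (simp add: k l Psi_single idT_single tensor_forest gr_tree mult_single islin_addD[OF islin_idT]
        idT_tensor[OF islin_Bp] tensor_add2 add.commute)
qed

lemma Tid_P4: "Tid (gr M) (Y * Z) = Tid (gr M) Y * Z + Y * Tid (gr M) Z"
proof (rule islin2_eqI[where F = "\<lambda>Y Z. Tid (gr M) (Y * Z)" and G = "\<lambda>Y Z. Tid (gr M) Y * Z + Y * Tid (gr M) Z"])
  show "islin (\<lambda>Y. Tid (gr M) (Y * Z))" for Z
    by (rule islin_compI[OF islin_Tid islin_mult_left]) simp
  show "islin (\<lambda>Z. Tid (gr M) (Y * Z))" for Y
    by (rule islin_compI[OF islin_Tid islin_mult_right]) simp
  show "islin (\<lambda>Y. Tid (gr M) Y * Z + Y * Tid (gr M) Z)" for Z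
    by (rule islin_add[OF islin_compI[OF islin_mult_left islin_Tid] islin_mult_left]) simp
  show "islin (\<lambda>Z. Tid (gr M) Y * Z + Y * Tid (gr M) Z)" for Y
    by (rule islin_add[OF islin_mult_right islin_compI[OF islin_mult_right islin_Tid]]) simp
  fix l m :: "forest \<times> forest"
  obtain c d where l: "l = (c, d)" by (cases l)
  obtain e f where m: "m = (e, f)" by (cases m)
  have "Tid (gr M) (Poly_Mapping.single l 1 * Poly_Mapping.single m 1)
      = tensor (gr M (forest c) * forest e + forest c * gr M (forest e)) (forest d * forest f)"
    by (simp add: l m mult_single Tid_single gr_forest_plus forest_mult)
  also have "\<dots> = tensor (gr M (forest c)) (forest d) * tensor (forest e) (forest f)
      + tensor (forest c) (forest d) * tensor (gr M (forest e)) (forest f)"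
    by (simp add: tensor_mult tensor_add1)
  also have "\<dots> = Tid (gr M) (Poly_Mapping.single l 1) * Poly_Mapping.single m 1
      + Poly_Mapping.single l 1 * Tid (gr M) (Poly_Mapping.single m 1)"
    by (simp add: l m Tid_single tensor_forest)
  finally show "Tid (gr M) (Poly_Mapping.single l 1 * Poly_Mapping.single m 1)
      = Tid (gr M) (Poly_Mapping.single l 1) * Poly_Mapping.single m 1
      + Poly_Mapping.single l 1 * Tid (gr M) (Poly_Mapping.single m 1)" .
qed

lemma Tid_idT: "islin f \<Longrightarrow> islin g \<Longrightarrow> Tid f (idT g Y) = idT g (Tid f Y)"
proof (rule islin_eqI[where F = "\<lambda>Y. Tid f (idT g Y)" and G = "\<lambda>Y. idT g (Tid f Y)"])
  show "islin (\<lambda>Y. Tid f (idT g Y))" by (rule islin_comp[OF islin_Tid islin_idT])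
  show "islin (\<lambda>Y. idT g (Tid f Y))" by (rule islin_comp[OF islin_idT islin_Tid])
  fix k :: "forest \<times> forest"
  assume f: "islin f" and g: "islin g"
  show "Tid f (idT g (Poly_Mapping.single k 1)) = idT g (Tid f (Poly_Mapping.single k 1))"
    by (simp add: idT_single Tid_single Tid_tensor[OF f] idT_tensor[OF g])
qed

definition Qd :: "forest \<Rightarrow> forest \<Rightarrow> bool" where
  "Qd M N \<longleftrightarrow> Delta (gr M (forest N)) = Psi (Delta_forest M) (Delta_forest N) + Tid (gr M) (Delta_forest N)"

lemma Q_empty: "Qd M {#}"
proof -
  have "gr M (forest {#}) = 0" by (simp add: gr_forest)
  then show ?thesis
    by (simp add: Qd_def Psi_one Tid_one[OF islin_gr] gr_one islin_zero[OF islin_Delta])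
qed

lemma Q_add: "Qd M {#t#} \<Longrightarrow> Qd M C \<Longrightarrow> Qd M (add_mset t C)"
proof -
  assume h1: "Qd M {#t#}" and h2: "Qd M C"
  let ?X = "Delta_forest M" and ?T = "Delta_forest {#t#}" and ?Y = "Delta_forest C"
  have f: "forest (add_mset t C) = forest {#t#} * forest C" by (simp add: forest_mult)
  have df: "Delta_forest (add_mset t C) = ?T * ?Y" by (simp add: Delta_forest_add_mset)
  have "Delta (gr M (forest (add_mset t C))) = Delta (gr M (forest {#t#})) * ?Y + ?T * Delta (gr M (forest C))"
    unfolding f gr_mult by (simp add: Delta_add Delta_mult Delta_forest')
  also have "\<dots> = (Psi ?X ?T + Tid (gr M) ?T) * ?Y + ?T * (Psi ?X ?Y + Tid (gr M) ?Y)"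
    using h1 h2 by (simp add: Qd_def)
  also have "\<dots> = Psi ?X (?T * ?Y) + Tid (gr M) (?T * ?Y)"
    by (simp add: Psi_P1 Tid_P4 algebra_simps)
  finally show ?thesis unfolding Qd_def df .
qed

lemma Q_forest: "(\<And>t. t \<in># C \<Longrightarrow> Qd M {#t#}) \<Longrightarrow> Qd M C"
proof (induction C)
  case empty
  show ?case by (rule Q_empty)
next
  case (add t C)
  then show ?case using Q_add by simp
qed

lemma Q_tree: "Qd M {#t#}"
proof (induction t)
  case (Node C)
  have QC: "Qd M C" by (rule Q_forest) (use Node in simp)
  let ?X = "Delta_forest M" and ?Y = "Delta_forest C"
  have "Delta (gr M (forest {#Node C#})) = Delta (forest {#Node (C + M)#}) + Delta (Bp (gr M (forest C)))"
    by (simp add: gr_tree Delta_add)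
  also have "\<dots> = tensor (forest {#Node (C + M)#}) 1 + idT Bp (?Y * ?X)
      + tensor (Bp (gr M (forest C))) 1 + idT Bp (Psi ?X ?Y + Tid (gr M) ?Y)"
    using QC by (simp add: Delta_forest' Delta_forest_add_mset Delta_tree_Node' Delta_forest_plus cocycle Qd_def)
  also have "\<dots> = Psi ?X (Delta_forest {#Node C#}) + Tid (gr M) (Delta_forest {#Node C#})"
    by (simp add: Delta_forest_add_mset Delta_tree_Node' islin_addD[OF islin_Psi2] islin_addD[OF islin_Tid]
        Psi_P2 Psi_P3 Tid_tensor[OF islin_gr] Tid_idT[OF islin_gr islin_Bp] gr_tree tensor_add1
        islin_addD[OF islin_idT] algebra_simps)
  finally show ?case unfolding Qd_def .
qed

lemma main_D: "Delta (gr M y) = Psi (Delta_forest M) (Delta y) + Tid (gr M) (Delta y)"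
proof (rule islin_eqI[where F = "\<lambda>y. Delta (gr M y)" and G = "\<lambda>y. Psi (Delta_forest M) (Delta y) + Tid (gr M) (Delta y)"])
  show "islin (\<lambda>y. Delta (gr M y))" by (rule islin_comp[OF islin_Delta islin_gr])
  show "islin (\<lambda>y. Psi (Delta_forest M) (Delta y) + Tid (gr M) (Delta y))"
    by (rule islin_add[OF islin_comp[OF islin_Psi2 islin_Delta] islin_comp[OF islin_Tid islin_Delta]])
  fix N
  show "Delta (gr M (Poly_Mapping.single N 1)) = Psi (Delta_forest M) (Delta (Poly_Mapping.single N 1)) + Tid (gr M) (Delta (Poly_Mapping.single N 1))"
    using Q_forest[of N M] Q_tree by (simp add: Qd_def forest_single Delta_forest')
qed


definition Bg :: "H \<Rightarrow> H \<Rightarrow> H" where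
  "Bg x q = lin (\<lambda>M. gr M q) x"

definition idB :: "H \<Rightarrow> HH \<Rightarrow> HH" where
  "idB q = lin (\<lambda>k. tensor (forest (fst k)) (gr (snd k) q))"

definition W :: "H \<Rightarrow> H" where
  "W = lin (\<lambda>N. scal (1 / of_nat (weight N)) (forest N))"

lemma islin_Bg1: "islin (\<lambda>x. Bg x q)" unfolding Bg_def by (rule islin_lin)
lemma islin_Bg2: "islin (Bg x)"
  unfolding islin_def Bg_def by (simp add: islin_addD[OF islin_gr] islin_scalD[OF islin_gr] lin_fun_add lin_fun_scal)
lemma islin_idB: "islin (idB q)" unfolding idB_def by (rule islin_lin)
lemma islin_W: "islin W" unfolding W_def by (rule islin_lin)

lemma Psi_E1: "Psi X (tensor 1 q) = idB q X"
proof (rule islin2_eqI[where F = "\<lambda>X q. Psi X (tensor 1 q)" and G = "\<lambda>X q. idB q X"])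
  show "islin (\<lambda>X. Psi X (tensor 1 q))" for q by (rule islin_Psi1)
  show "islin (\<lambda>q. Psi X (tensor 1 q))" for X
    by (rule islin_compI[OF islin_Psi2 islin_tensor2]) simp
  show "islin (\<lambda>X. idB q X)" for q by (rule islin_idB)
  show "islin (\<lambda>q. idB q X)" for X
    unfolding islin_def idB_def
    by (simp add: islin_addD[OF islin_gr] islin_scalD[OF islin_gr] tensor_add2 tensor_scal2 lin_fun_add lin_fun_scal)
  fix k :: "forest \<times> forest" and d :: forest
  show "Psi (Poly_Mapping.single k 1) (tensor 1 (Poly_Mapping.single d 1)) = idB (Poly_Mapping.single d 1) (Poly_Mapping.single k 1)"
    by (simp add: one_single_tensor Psi_single idB_def forest_def)
qed

lemma prim_Delta: "primitive q \<Longrightarrow> Delta q = tensor 1 q + tensor q 1"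
  unfolding primitive_def rDelta_def by (simp add: algebra_simps)

lemma E2: "primitive q \<Longrightarrow> Delta (gr M q) = idB q (Delta_forest M) + tensor (gr M q) 1"
  by (simp add: main_D prim_Delta islin_addD[OF islin_Psi2] islin_addD[OF islin_Tid] Psi_E1 Psi_P2
      Tid_tensor[OF islin_gr] gr_one)

lemma E3: "primitive q \<Longrightarrow> Delta (Bg x q) = idB q (Delta x) + tensor (Bg x q) 1"
proof (rule islin_eqI[where F = "\<lambda>x. Delta (Bg x q)" and G = "\<lambda>x. idB q (Delta x) + tensor (Bg x q) 1"])
  show "islin (\<lambda>x. Delta (Bg x q))" by (rule islin_comp[OF islin_Delta islin_Bg1])
  show "islin (\<lambda>x. idB q (Delta x) + tensor (Bg x q) 1)"
    by (rule islin_add[OF islin_comp[OF islin_idB islin_Delta] islin_compI[OF islin_tensor1 islin_Bg1]]) simp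
  fix M
  assume "primitive q"
  then show "Delta (Bg (Poly_Mapping.single M 1) q) = idB q (Delta (Poly_Mapping.single M 1)) + tensor (Bg (Poly_Mapping.single M 1) q) 1"
    by (simp add: Bg_def E2)
qed

lemma E4: "idB q (tensor u v) = tensor u (Bg v q)"
proof (rule islin2_eqI[where F = "\<lambda>u v. idB q (tensor u v)" and G = "\<lambda>u v. tensor u (Bg v q)"])
  show "islin (\<lambda>u. idB q (tensor u v))" for v
    by (rule islin_compI[OF islin_idB islin_tensor1]) simp
  show "islin (\<lambda>v. idB q (tensor u v))" for u
    by (rule islin_compI[OF islin_idB islin_tensor2]) simp
  show "islin (\<lambda>u. tensor u (Bg v q))" for v by (rule islin_tensor1)
  show "islin (\<lambda>v. tensor u (Bg v q))" for u
    by (rule islin_compI[OF islin_tensor2 islin_Bg1]) simp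
qed (simp add: idB_def Bg_def forest_def)

lemma E5: "primitive q \<Longrightarrow> rDelta (Bg x q) = tensor x (Bg 1 q) + idB q (rDelta x)"
proof -
  assume q: "primitive q"
  have "Delta x = rDelta x + tensor 1 x + tensor x 1" by (simp add: rDelta_def)
  then have "idB q (Delta x) = idB q (rDelta x) + tensor 1 (Bg x q) + tensor x (Bg 1 q)"
    by (simp add: islin_addD[OF islin_idB] E4)
  then show ?thesis
    unfolding rDelta_def[of "Bg x q"] E3[OF q] by (simp add: rDelta_def algebra_simps)
qed

lemma top_lin: "top x y = lin (\<lambda>M. lin (\<lambda>N. top_forest M N) y) x"
  unfolding top_def lin_def by (simp add: scal_sum)

lemma gr_scal: "gr M (scal c x) = scal c (gr M x)"
  by (rule islin_scalD[OF islin_gr])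

lemma top_forest_gr: "top_forest M N = gr M (W (Poly_Mapping.single N 1))"
  by (simp add: top_forest_def W_def gr_scal gr_forest)

lemma top_eq: "top x y = Bg x (W y)"
proof -
  have "lin (\<lambda>N. top_forest M N) y = gr M (W y)" for M
  proof -
    have "islin (\<lambda>y. gr M (W y))" by (rule islin_comp[OF islin_gr islin_W])
    from islin_ext[OF this, of y] show ?thesis by (simp add: top_forest_gr)
  qed
  then show ?thesis by (simp add: top_lin Bg_def)
qed

lemma Bg_one: "Bg 1 z = gr {#} z"
proof -
  have "Bg (Poly_Mapping.single {#} 1) z = gr {#} z" by (simp only: Bg_def lin_single scal_1)
  then show ?thesis by simp
qed

lemma gr_empty_W_single: "gr {#} (W (Poly_Mapping.single N 1)) = (if N = {#} then 0 else Poly_Mapping.single N 1)"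
  by (simp add: W_def gr_scal gr_empty_forest weight_eq_0)

lemma Bg_one_W: "Poly_Mapping.lookup p {#} = 0 \<Longrightarrow> Bg 1 (W p) = p"
proof -
  assume p0: "Poly_Mapping.lookup p {#} = 0"
  have "islin (\<lambda>y. gr {#} (W y))" by (rule islin_comp[OF islin_gr islin_W])
  from islin_ext[OF this, of p]
  have "gr {#} (W p) = lin (\<lambda>N. if N = {#} then 0 else Poly_Mapping.single N 1) p"
    by (simp add: gr_empty_W_single)
  also have "\<dots> = lin (\<lambda>N. Poly_Mapping.single N 1) p"
    by (rule lin_cong) (use p0 in \<open>auto simp: in_keys_iff\<close>)
  finally show ?thesis by (simp add: Bg_one lin_id)
qed


definition hom :: "nat \<Rightarrow> HH \<Rightarrow> bool" where
  "hom n X \<longleftrightarrow> (\<forall>k\<in>Poly_Mapping.keys X. weight (fst k) + weight (snd k) = n)"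

lemma hom_add: "hom n X \<Longrightarrow> hom n Y \<Longrightarrow> hom n (X + Y)"
proof -
  assume hX: "hom n X" and hY: "hom n Y"
  show ?thesis unfolding hom_def
  proof
    fix k assume "k \<in> Poly_Mapping.keys (X + Y)"
    then have "k \<in> Poly_Mapping.keys X \<union> Poly_Mapping.keys Y" by (rule subsetD[OF keys_add])
    then show "weight (fst k) + weight (snd k) = n" using hX hY unfolding hom_def by blast
  qed
qed

lemma hom_mult: "hom a X \<Longrightarrow> hom b Y \<Longrightarrow> hom (a + b) (X * Y)"
  unfolding hom_def
proof
  fix k assume hX: "\<forall>k\<in>Poly_Mapping.keys X. weight (fst k) + weight (snd k) = a"
    and hY: "\<forall>k\<in>Poly_Mapping.keys Y. weight (fst k) + weight (snd k) = b"
    and k: "k \<in> Poly_Mapping.keys (X * Y)"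
  then obtain u v where "k = u + v" "u \<in> Poly_Mapping.keys X" "v \<in> Poly_Mapping.keys Y"
    using keys_mult by blast
  then show "weight (fst k) + weight (snd k) = a + b"
    using hX hY by (auto simp: weight_plus)
qed

lemma hom_single: "weight (fst k) + weight (snd k) = n \<Longrightarrow> hom n (Poly_Mapping.single k c)"
  unfolding hom_def by simp

lemma hom_one: "hom 0 1"
  unfolding hom_def by simp

lemma hom_scal: "hom n X \<Longrightarrow> hom n (scal c X)"
  unfolding hom_def using keys_scal[of c X] by (meson subsetD)

lemma hom_sum: "(\<And>a. a \<in> A \<Longrightarrow> hom n (f a)) \<Longrightarrow> hom n (sum f A)"
proof -
  assume h: "\<And>a. a \<in> A \<Longrightarrow> hom n (f a)"
  show ?thesis unfolding hom_def
  proof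
    fix k assume "k \<in> Poly_Mapping.keys (sum f A)"
    then have "k \<in> (\<Union>a\<in>A. Poly_Mapping.keys (f a))" by (rule subsetD[OF keys_sum])
    then obtain a where "a \<in> A" "k \<in> Poly_Mapping.keys (f a)" by blast
    then show "weight (fst k) + weight (snd k) = n" using h unfolding hom_def by auto
  qed
qed

lemma weight_Node: "weight {#Node F#} = Suc (weight F)"
  by (simp add: weight_def)

lemma weight_tree_Node: "weight_tree (Node F) = Suc (weight F)"
  by (simp add: weight_def)

lemma hom_Rt: "hom n X \<Longrightarrow> hom (Suc n) (Rt X)"
  unfolding Rt_def lin_def
  by (rule hom_sum, rule hom_scal, rule hom_single) (auto simp: hom_def weight_tree_Node simp del: weight_tree.simps)

lemma hom_forest: "(\<And>t. t \<in># D \<Longrightarrow> hom (weight_tree t) (Delta_tree t)) \<Longrightarrow> hom (weight D) (Delta_forest D)"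
proof (induction D)
  case empty
  then show ?case by (simp add: hom_one)
next
  case (add t D)
  then have "hom (weight_tree t + weight D) (Delta_tree t * Delta_forest D)"
    by (intro hom_mult) auto
  then show ?case by (simp add: Delta_forest_add_mset weight_def)
qed

lemma hom_tree: "hom (weight_tree t) (Delta_tree t)"
proof (induction t)
  case (Node D)
  have "hom (weight D) (Delta_forest D)" by (rule hom_forest) (use Node in simp)
  then have "hom (Suc (weight D)) (Rt (Delta_forest D))" by (rule hom_Rt)
  moreover have "hom (Suc (weight D)) (Poly_Mapping.single ({#Node D#}, {#}) 1)"
    by (rule hom_single) (simp add: weight_tree_Node del: weight_tree.simps)
  ultimately show ?case
    unfolding Delta_tree_Node by (simp add: hom_add weight_tree_Node del: weight_tree.simps)
qed

lemma hom_Delta_forest: "hom (weight N) (Delta_forest N)"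
  by (rule hom_forest) (rule hom_tree)

lemma lookup_lin: "Poly_Mapping.lookup (lin f x) k = (\<Sum>a\<in>Poly_Mapping.keys x. Poly_Mapping.lookup x a * Poly_Mapping.lookup (f a) k)"
  by (simp add: lin_def lookup_sum)

lemma sum_keys_delta: "(\<Sum>a\<in>Poly_Mapping.keys (x :: 'a \<Rightarrow>\<^sub>0 rat). Poly_Mapping.lookup x a * (if a = c then r else 0)) = Poly_Mapping.lookup x c * r"
proof -
  have "(\<Sum>a\<in>Poly_Mapping.keys x. Poly_Mapping.lookup x a * (if a = c then r else 0))
      = (\<Sum>a\<in>Poly_Mapping.keys x. if a = c then Poly_Mapping.lookup x c * r else 0)"
    by (rule sum.cong) auto
  also have "\<dots> = Poly_Mapping.lookup x c * r"
    by (simp add: in_keys_iff)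
  finally show ?thesis .
qed

lemma tensor_1_lin: "tensor 1 p = lin (\<lambda>N. Poly_Mapping.single ({#}, N) 1) p"
  using islin_ext[OF islin_tensor2[of 1], of p] by (simp add: one_single_tensor)

lemma tensor_lin_1: "tensor p 1 = lin (\<lambda>N. Poly_Mapping.single (N, {#}) 1) p"
  using islin_ext[OF islin_tensor1[of 1], of p] by (simp add: tensor_1_single)

lemma lookup_Delta_forest_00: "Poly_Mapping.lookup (Delta_forest N) ({#}, {#}) = (if N = {#} then 1 else 0)"
proof (cases "N = {#}")
  case True
  then show ?thesis by (simp add: lookup_one zero_prod_def)
next
  case False
  then have "weight N \<noteq> 0" by (simp add: weight_eq_0)
  then have "({#}, {#}) \<notin> Poly_Mapping.keys (Delta_forest N)"
    using hom_Delta_forest[of N] unfolding hom_def by auto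
  then show ?thesis using False by (simp add: in_keys_iff)
qed

lemma prim_zero: "primitive p \<Longrightarrow> Poly_Mapping.lookup p {#} = 0"
proof -
  assume "primitive p"
  then have "Poly_Mapping.lookup (rDelta p) ({#}, {#}) = 0" by (simp add: primitive_def)
  moreover have "Poly_Mapping.lookup (Delta p) ({#}, {#}) = Poly_Mapping.lookup p {#}"
    unfolding Delta_lin lookup_lin lookup_Delta_forest_00 by (simp add: sum_keys_delta)
  moreover have "Poly_Mapping.lookup (tensor 1 p) ({#}, {#}) = Poly_Mapping.lookup p {#}"
    unfolding tensor_1_lin lookup_lin by (simp add: lookup_single when_def sum_keys_delta)
  moreover have "Poly_Mapping.lookup (tensor p 1) ({#}, {#}) = Poly_Mapping.lookup p {#}"
    unfolding tensor_lin_1 lookup_lin by (simp add: lookup_single when_def sum_keys_delta)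
  ultimately show ?thesis by (simp add: rDelta_def lookup_minus)
qed

definition Wt :: "HH \<Rightarrow> HH" where
  "Wt = lin (\<lambda>k. scal (1 / of_nat (weight (fst k) + weight (snd k))) (Poly_Mapping.single k 1))"

lemma islin_Wt: "islin Wt" unfolding Wt_def by (rule islin_lin)

lemma Wt_hom: "hom n X \<Longrightarrow> Wt X = scal (1 / of_nat n) X"
proof -
  assume h: "hom n X"
  have "Wt X = lin (\<lambda>k. scal (1 / of_nat n) (Poly_Mapping.single k 1)) X"
    unfolding Wt_def by (rule lin_cong) (use h in \<open>simp add: hom_def\<close>)
  also have "\<dots> = scal (1 / of_nat n) X"
    by (simp only: lin_fun_scal lin_id)
  finally show ?thesis .
qed

lemma W_single: "W (Poly_Mapping.single N 1) = scal (1 / of_nat (weight N)) (forest N)"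
  by (simp add: W_def)

lemma Delta_W: "Delta (W y) = Wt (Delta y)"
proof (rule islin_eqI[where F = "\<lambda>y. Delta (W y)" and G = "\<lambda>y. Wt (Delta y)"])
  show "islin (\<lambda>y. Delta (W y))" by (rule islin_comp[OF islin_Delta islin_W])
  show "islin (\<lambda>y. Wt (Delta y))" by (rule islin_comp[OF islin_Wt islin_Delta])
  fix N
  show "Delta (W (Poly_Mapping.single N 1)) = Wt (Delta (Poly_Mapping.single N 1))"
    by (simp add: W_single islin_scalD[OF islin_Delta] Delta_forest' Wt_hom[OF hom_Delta_forest])
qed

lemma tensor1_W: "tensor 1 (W y) = Wt (tensor 1 y)"
proof (rule islin_eqI[where F = "\<lambda>y. tensor 1 (W y)" and G = "\<lambda>y. Wt (tensor 1 y)"])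
  show "islin (\<lambda>y. tensor 1 (W y))" by (rule islin_comp[OF islin_tensor2 islin_W])
  show "islin (\<lambda>y. Wt (tensor 1 y))" by (rule islin_comp[OF islin_Wt islin_tensor2])
  fix N
  show "tensor 1 (W (Poly_Mapping.single N 1)) = Wt (tensor 1 (Poly_Mapping.single N 1))"
    by (simp add: W_single tensor_scal2 one_single_tensor forest_def Wt_def)
qed

lemma tensorW_1: "tensor (W y) 1 = Wt (tensor y 1)"
proof (rule islin_eqI[where F = "\<lambda>y. tensor (W y) 1" and G = "\<lambda>y. Wt (tensor y 1)"])
  show "islin (\<lambda>y. tensor (W y) 1)" by (rule islin_compI[OF islin_tensor1 islin_W]) simp
  show "islin (\<lambda>y. Wt (tensor y 1))" by (rule islin_compI[OF islin_Wt islin_tensor1]) simp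
  fix N
  show "tensor (W (Poly_Mapping.single N 1)) 1 = Wt (tensor (Poly_Mapping.single N 1) 1)"
    by (simp add: W_single tensor_scal1 tensor_1_single forest_def Wt_def)
qed

lemma W_prim: "primitive y \<Longrightarrow> primitive (W y)"
proof -
  assume "primitive y"
  then have "rDelta y = 0" by (simp add: primitive_def)
  have "rDelta (W y) = Wt (rDelta y)"
    by (simp add: rDelta_def Delta_W tensor1_W tensorW_1 islin_diff[OF islin_Wt])
  then show ?thesis using \<open>rDelta y = 0\<close> by (simp add: primitive_def islin_zero[OF islin_Wt])
qed

lemma top_step: "primitive p \<Longrightarrow> rDelta (top x p) = tensor x p + idB (W p) (rDelta x)"
  by (simp add: top_eq E5 W_prim Bg_one_W prim_zero)

lemma idB_top: "idB (W p) (tensor u v) = tensor u (top v p)"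
  by (simp add: E4 top_eq)

lemma gen:
  "(\<And>j. k \<le> j \<Longrightarrow> j \<le> k + n \<Longrightarrow> primitive (p j)) \<Longrightarrow>
   rDelta (itop p k n) = (\<Sum>j = k..<k + n. tensor (itop p (j + 1) (k + n - j - 1)) (itop p k (j - k)))"
proof (induction n arbitrary: k)
  case 0
  then show ?case by (simp add: primitive_def)
next
  case (Suc n)
  let ?X = "itop p (Suc k) n"
  have pk: "primitive (p k)" using Suc.prems by simp
  have IH: "rDelta ?X = (\<Sum>j = Suc k..<Suc k + n. tensor (itop p (j + 1) (Suc k + n - j - 1)) (itop p (Suc k) (j - Suc k)))"
    by (rule Suc.IH) (use Suc.prems in simp)
  have "rDelta (itop p k (Suc n)) = tensor ?X (p k) + idB (W (p k)) (rDelta ?X)"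
    by (simp add: top_step[OF pk])
  also have "idB (W (p k)) (rDelta ?X) = (\<Sum>j = Suc k..<Suc k + n. tensor (itop p (j + 1) (Suc k + n - j - 1)) (top (itop p (Suc k) (j - Suc k)) (p k)))"
    by (simp only: IH islin_sum[OF islin_idB] idB_top)
  also have "\<dots> = (\<Sum>j = Suc k..<k + Suc n. tensor (itop p (j + 1) (k + Suc n - j - 1)) (itop p k (j - k)))"
  proof (rule sum.cong)
    fix j assume "j \<in> {Suc k..<k + Suc n}"
    then have j: "Suc k \<le> j" by simp
    then have "j - k = Suc (j - Suc k)" by simp
    then have "itop p k (j - k) = top (itop p (Suc k) (j - Suc k)) (p k)" by simp
    then show "tensor (itop p (j + 1) (Suc k + n - j - 1)) (top (itop p (Suc k) (j - Suc k)) (p k))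
        = tensor (itop p (j + 1) (k + Suc n - j - 1)) (itop p k (j - k))" by simp
  qed simp
  also have "tensor ?X (p k) + \<dots> = (\<Sum>j = k..<k + Suc n. tensor (itop p (j + 1) (k + Suc n - j - 1)) (itop p k (j - k)))"
    by (subst sum.atLeast_Suc_lessThan) simp_all
  finally show ?case .
qed

theorem lemma4p3:
  fixes p :: "nat \<Rightarrow> H" and i :: nat
  assumes "i \<ge> 1"
    and "\<forall>j\<in>{1..i}. primitive (p j)"
  shows "rDelta (itop p 1 (i - 1)) =
    (\<Sum>j = 1..i - 1. tensor (itop p (j + 1) (i - j - 1)) (itop p 1 (j - 1)))"
proof -
  have "rDelta (itop p 1 (i - 1)) = (\<Sum>j = 1..<1 + (i - 1). tensor (itop p (j + 1) (1 + (i - 1) - j - 1)) (itop p 1 (j - 1)))"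
    by (rule gen) (use assms in auto)
  also have "\<dots> = (\<Sum>j = 1..i - 1. tensor (itop p (j + 1) (i - j - 1)) (itop p 1 (j - 1)))"
    using assms(1) by (intro sum.cong) auto
  finally show ?thesis .
qed


end
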